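(* Let $m,n,N$ be positive integers and for each $1\le i\le 2m$ let $\mathbf{x}^{(i)}=(\mathbf{x}^{(i)}_1,\dots,\mathbf{x}^{(i)}_n)$ be a sequence of $n$ variables. Then $$\sum_{\substack{\lambda:\ \ell(\lambda)\le n\\ \lambda_1\le N}}s_\lambda(\mathbf{x}^{(1)})s_\lambda(\mathbf{x}^{(2)})\cdots s_\lambda(\mathbf{x}^{(2m)})=\prod_{i=1}^{2m}\frac{1}{V(\mathbf{x}^{(i)})}\cdot\mathrm{Det}^{[2m]}\left(\frac{1-(\mathbf{x}^{(1)}_{i_1}\cdots\mathbf{x}^{(2m)}_{i_{2m}})^{n+N}}{1-\mathbf{x}^{(1)}_{i_1}\cdots\mathbf{x}^{(2m)}_{i_{2m}}}\right)_{1\le i_1,\dots,i_{2m}\le n},$$ the sum being over all partitions $\lambda$ with at most $n$ parts and largest part at most $N$.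
   Context: $V(\mathbf{x})=\prod_{1\le i<j\le n}(\mathbf{x}_i-\mathbf{x}_j)$ is the Vandermonde product; $s_\lambda(\mathbf{x})=\det(\mathbf{x}_i^{\lambda_j+n-j})_{1\le i,j\le n}/V(\mathbf{x})$ is the Schur polynomial in $n$ variables. Each entry $\frac{1-y^{n+N}}{1-y}$ means the polynomial $\sum_{k=0}^{n+N-1}y^k$. Hyperdeterminant: $\mathrm{Det}^{[2m]}(A):=\frac{1}{n!}\sum_{\sigma_1,\dots,\sigma_{2m}\in\mathfrak{S}_n}\mathrm{sgn}(\sigma_1)\cdots\mathrm{sgn}(\sigma_{2m})\prod_{i=1}^nA(\sigma_1(i),\dots,\sigma_{2m}(i))$. *)

theory Defs
  imports "HOL-Combinatorics.Permutations"
begin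

text \<open>Variables are indexed from 0: a sequence of n variables is a function
  x :: nat => 'a, of which x 0, ..., x (n-1) are used.\<close>

definition vandermonde :: "nat \<Rightarrow> (nat \<Rightarrow> 'a::comm_ring_1) \<Rightarrow> 'a" where
  "vandermonde n x = (\<Prod>i<n. \<Prod>j\<in>{i<..<n}. (x i - x j))"

definition ldet :: "nat \<Rightarrow> (nat \<Rightarrow> nat \<Rightarrow> 'a::comm_ring_1) \<Rightarrow> 'a" where
  "ldet n A = (\<Sum>p\<in>{p. p permutes {..<n}}. of_int (sign p) * (\<Prod>i<n. A i (p i)))"

definition bounded_partitions :: "nat \<Rightarrow> nat \<Rightarrow> (nat \<Rightarrow> nat) set" where
  "bounded_partitions n N = {lam. (\<forall>i j. i \<le> j \<longrightarrow> j < n \<longrightarrow> lam j \<le> lam i)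
      \<and> (\<forall>i<n. lam i \<le> N) \<and> (\<forall>i\<ge>n. lam i = 0)}"

definition schur :: "nat \<Rightarrow> (nat \<Rightarrow> nat) \<Rightarrow> (nat \<Rightarrow> 'a::field) \<Rightarrow> 'a" where
  "schur n lam x = ldet n (\<lambda>i j. x i ^ (lam j + n - 1 - j)) / vandermonde n x"

text \<open>Hyperdeterminant of order k (k = 2m) of an n x ... x n array A, whose argument
  is an index tuple t (only t 0, ..., t (k-1) matter):
  Det^[k](A) = 1/n! * sum over sigma_1..sigma_k of prod sgn * prod_i A(sigma_1 i,...,sigma_k i).\<close>
definition hyperdet :: "nat \<Rightarrow> nat \<Rightarrow> ((nat \<Rightarrow> nat) \<Rightarrow> 'a::field_char_0) \<Rightarrow> 'a" where
  "hyperdet k n A = (1 / of_nat (fact n)) *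
     (\<Sum>\<sigma>\<in>(PiE {..<k} (\<lambda>_. {p. p permutes {..<n}})).
        (\<Prod>l<k. of_int (sign (\<sigma> l))) *
        (\<Prod>i<n. A (\<lambda>l. if l < k then \<sigma> l i else 0)))"

end

theory Submission
  imports Defs
begin

definition E :: "nat \<Rightarrow> (nat \<Rightarrow> 'a::comm_ring_1) \<Rightarrow> (nat \<Rightarrow> nat) \<Rightarrow> 'a" where
  "E n y f = ldet n (\<lambda>i j. y i ^ f j)"

lemma E_alt:
  "(\<Sum>p\<in>{p. p permutes {..<n}}. of_int (sign p) * (\<Prod>i<n. y (p i) ^ f i)) = E n y f"
proof -
  have "(\<Sum>p\<in>{p. p permutes {..<n}}. of_int (sign p) * (\<Prod>i<n. y (p i) ^ f i))
     = (\<Sum>p\<in>{p. p permutes {..<n}}. of_int (sign (inv p)) * (\<Prod>i<n. y (inv p i) ^ f i))"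
    by (rule sum_permutations_inverse)
  also have "\<dots> = (\<Sum>p\<in>{p. p permutes {..<n}}. of_int (sign p) * (\<Prod>i<n. y i ^ f (p i)))"
  proof (rule sum.cong[OF refl])
    fix p assume "p \<in> {p. p permutes {..<n}}"
    then have p: "p permutes {..<n}" by simp
    have s: "sign (inv p) = sign p"
      using p by (metis sign_inverse permutes_imp_permutation finite_lessThan)
    have "(\<Prod>i<n. y (inv p i) ^ f i) = (\<Prod>i<n. y (inv p (p i)) ^ f (p i))"
      using prod.permute[OF p, of "\<lambda>i. y (inv p i) ^ f i"] by (simp add: o_def)
    also have "\<dots> = (\<Prod>i<n. y i ^ f (p i))"
      using p by (simp add: permutes_inverses)
    finally show "of_int (sign (inv p)) * (\<Prod>i<n. y (inv p i) ^ f i) = of_int (sign p) * (\<Prod>i<n. y i ^ f (p i))"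
      using s by simp
  qed
  finally show ?thesis by (simp add: E_def ldet_def)
qed

lemma E_cong:
  assumes fg: "\<And>j. j < n \<Longrightarrow> f j = g j"
  shows "E n y f = E n y g"
  unfolding E_def ldet_def
proof (rule sum.cong[OF refl])
  fix p assume p: "p \<in> {p. p permutes {..<n}}"
  have "(\<Prod>i<n. y i ^ f (p i)) = (\<Prod>i<n. y i ^ g (p i))"
  proof (rule prod.cong[OF refl])
    fix i assume i: "i \<in> {..<n}"
    have "p i < n" using permutes_in_image[of p "{..<n}" i] p i by simp
    then show "y i ^ f (p i) = y i ^ g (p i)" using fg by simp
  qed
  then show "of_int (sign p) * (\<Prod>i<n. y i ^ f (p i)) = of_int (sign p) * (\<Prod>i<n. y i ^ g (p i))"
    by simp
qed

lemma E_compose: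
  assumes t: "t permutes {..<n}"
  shows "E n y (f \<circ> t) = of_int (sign t) * E n y f"
proof -
  define P where "P = {p. p permutes {..<n}}"
  define G where "G = (\<lambda>p. (of_int (sign p) :: 'a) * (\<Prod>i<n. y i ^ f (p i)))"
  define H where "H = (\<lambda>p. (of_int (sign p) :: 'a) * (\<Prod>i<n. y i ^ (f \<circ> t) (p i)))"
  have r: "sum K P = sum (\<lambda>p. K (t \<circ> p)) P" for K :: "(nat \<Rightarrow> nat) \<Rightarrow> 'a"
    unfolding P_def by (rule setum_permutations_compose_left[OF t])
  have Ef: "E n y f = sum G P" by (simp add: E_def ldet_def G_def P_def)
  have Eft: "E n y (f \<circ> t) = sum H P" by (simp add: E_def ldet_def H_def P_def)
  have ss: "(of_int (sign t) :: 'a) * of_int (sign t) = 1"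
    by (metis of_int_1 of_int_mult sign_idempotent)
  have tm: "G (t \<circ> p) = of_int (sign t) * H p" if p: "p \<in> P" for p
  proof -
    have "sign (t \<circ> p) = sign t * sign p"
      using t p unfolding P_def by (metis mem_Collect_eq sign_compose permutes_imp_permutation finite_lessThan)
    then have "(of_int (sign (t \<circ> p)) :: 'a) = of_int (sign t) * of_int (sign p)"
      by (simp only: of_int_mult)
    then show ?thesis unfolding G_def H_def by (simp only: comp_apply mult.assoc)
  qed
  have "E n y f = sum (\<lambda>p. G (t \<circ> p)) P" unfolding Ef by (rule r)
  also have "\<dots> = sum (\<lambda>p. of_int (sign t) * H p) P" by (rule sum.cong[OF refl]) (rule tm)
  also have "\<dots> = of_int (sign t) * E n y (f \<circ> t)" unfolding Eft by (rule sum_distrib_left[symmetric])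
  finally have h: "E n y f = of_int (sign t) * E n y (f \<circ> t)" .
  have "of_int (sign t) * E n y f = (of_int (sign t) * of_int (sign t)) * E n y (f \<circ> t)"
    by (subst h) (simp only: mult.assoc)
  then have "of_int (sign t) * E n y f = E n y (f \<circ> t)"
    by (simp only: ss mult_1_left)
  then show ?thesis by (rule sym)
qed

lemma minus_self_zero:
  fixes e :: "'a::field_char_0"
  assumes h: "e = -1 * e"
  shows "e = 0"
proof -
  have "e - e = 0" by simp
  then have "e - (-1 * e) = 0" using h by metis
  moreover have "e - (-1 * e) = 2 * e" by simp
  ultimately show ?thesis by simp
qed

lemma E_zero:
  fixes y :: "nat \<Rightarrow> 'a::field_char_0"
  assumes "a < n" "b < n" "a \<noteq> b" "f a = f b"
  shows "E n y f = 0"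
proof -
  have ft: "f \<circ> Transposition.transpose a b = f"
    using assms by (auto simp: fun_eq_iff Transposition.transpose_def)
  have eq: "E n y (f \<circ> Transposition.transpose a b) = of_int (sign (Transposition.transpose a b)) * E n y f"
    by (rule E_compose[OF permutes_swap_id[of a "{..<n}" b]]) (use assms in auto)
  have s: "(of_int (sign (Transposition.transpose a b)) :: 'a) = -1"
    using assms by (simp add: sign_swap_id)
  have "E n y f = -1 * E n y f"
    using eq unfolding ft s .
  then show ?thesis by (rule minus_self_zero)
qed


lemma hyper_expand:
  fixes x :: "nat \<Rightarrow> nat \<Rightarrow> 'a::field_char_0"
  shows "hyperdet k n (\<lambda>t. \<Sum>r<M. (\<Prod>l<k. x l (t l)) ^ r)
    = 1 / of_nat (fact n) * (\<Sum>f\<in>PiE {..<n} (\<lambda>_. {..<M}). \<Prod>l<k. E n (x l) f)"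
proof -
  let ?P = "{p. p permutes {..<n}}"
  let ?F = "PiE {..<n} (\<lambda>_. {..<M})"
  have finP: "finite ?P" by (simp add: finite_permutations)
  have inner: "(\<Prod>l<k. of_int (sign (\<sigma> l))) *
        (\<Prod>i<n. (\<lambda>t. \<Sum>r<M. (\<Prod>l<k. x l (t l)) ^ r) (\<lambda>l. if l < k then \<sigma> l i else 0))
      = (\<Sum>f\<in>?F. \<Prod>l<k. of_int (sign (\<sigma> l)) * (\<Prod>i<n. x l (\<sigma> l i) ^ f i))" for \<sigma>
  proof -
    have "(\<Prod>i<n. (\<lambda>t. \<Sum>r<M. (\<Prod>l<k. x l (t l)) ^ r) (\<lambda>l. if l < k then \<sigma> l i else 0))
        = (\<Prod>i<n. \<Sum>r<M. (\<Prod>l<k. x l (\<sigma> l i)) ^ r)"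
      by (intro prod.cong sum.cong refl) auto
    also have "\<dots> = (\<Sum>f\<in>?F. \<Prod>i<n. (\<Prod>l<k. x l (\<sigma> l i)) ^ f i)"
      by (rule prod_sum_PiE) auto
    also have "\<dots> = (\<Sum>f\<in>?F. \<Prod>l<k. \<Prod>i<n. x l (\<sigma> l i) ^ f i)"
      by (intro sum.cong refl) (simp add: prod_power_distrib prod.swap[of _ "{..<n}"])
    finally show ?thesis
      by (simp add: sum_distrib_left prod.distrib)
  qed
  have "hyperdet k n (\<lambda>t. \<Sum>r<M. (\<Prod>l<k. x l (t l)) ^ r)
     = 1 / of_nat (fact n) * (\<Sum>\<sigma>\<in>PiE {..<k} (\<lambda>_. ?P).
         \<Sum>f\<in>?F. \<Prod>l<k. of_int (sign (\<sigma> l)) * (\<Prod>i<n. x l (\<sigma> l i) ^ f i))"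
    unfolding hyperdet_def by (simp only: inner)
  also have "\<dots> = 1 / of_nat (fact n) * (\<Sum>f\<in>?F. \<Sum>\<sigma>\<in>PiE {..<k} (\<lambda>_. ?P).
         \<Prod>l<k. of_int (sign (\<sigma> l)) * (\<Prod>i<n. x l (\<sigma> l i) ^ f i))"
    by (simp add: sum.swap[of _ ?F])
  also have "\<dots> = 1 / of_nat (fact n) * (\<Sum>f\<in>?F. \<Prod>l<k. E n (x l) f)"
  proof -
    have "(\<Sum>\<sigma>\<in>PiE {..<k} (\<lambda>_. ?P). \<Prod>l<k. of_int (sign (\<sigma> l)) * (\<Prod>i<n. x l (\<sigma> l i) ^ f i))
        = (\<Prod>l<k. \<Sum>p\<in>?P. of_int (sign p) * (\<Prod>i<n. x l (p i) ^ f i))" for f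
      by (rule prod_sum_PiE[symmetric]) (auto simp: finP)
    then show ?thesis by (simp add: E_alt)
  qed
  finally show ?thesis .
qed


definition mu :: "nat \<Rightarrow> (nat \<Rightarrow> nat) \<Rightarrow> nat \<Rightarrow> nat" where
  "mu n lam j = lam j + n - 1 - j"

lemma mu_strict:
  assumes "lam \<in> bounded_partitions n N" "i < j" "j < n"
  shows "mu n lam j < mu n lam i"
proof -
  have "lam j \<le> lam i" using assms by (auto simp: bounded_partitions_def)
  then show ?thesis using assms by (simp add: mu_def)
qed

lemma mu_bound:
  assumes "lam \<in> bounded_partitions n N" "j < n"
  shows "mu n lam j < n + N"
proof -
  have "lam j \<le> N" using assms by (auto simp: bounded_partitions_def)
  then show ?thesis using assms by (simp add: mu_def)
qed

lemma mu_inj: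
  assumes "lam \<in> bounded_partitions n N"
  shows "inj_on (mu n lam) {..<n}"
proof (rule inj_onI)
  fix a b assume "a \<in> {..<n}" "b \<in> {..<n}" "mu n lam a = mu n lam b"
  then show "a = b" using mu_strict[OF assms, of a b] mu_strict[OF assms, of b a]
    by (cases a b rule: linorder_cases) auto
qed

lemma mu_list_sorted:
  assumes "lam \<in> bounded_partitions n N"
  shows "sorted_wrt (<) (map (mu n lam) (rev [0..<n]))"
  unfolding sorted_wrt_iff_nth_less
  using mu_strict[OF assms] by (auto simp: rev_nth)

lemma mu_unique:
  assumes "lam \<in> bounded_partitions n N" "lam' \<in> bounded_partitions n N"
    and "mu n lam ` {..<n} = mu n lam' ` {..<n}"
  shows "lam = lam'"
proof -
  have "map (mu n lam) (rev [0..<n]) = map (mu n lam') (rev [0..<n])"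
    by (rule strict_sorted_equal[OF mu_list_sorted[OF assms(2)] mu_list_sorted[OF assms(1)]])
       (use assms(3) in \<open>simp add: lessThan_atLeast0\<close>)
  then have eq: "mu n lam j = mu n lam' j" if "j < n" for j
    using that by (auto simp: map_eq_conv)
  show ?thesis
  proof
    fix j show "lam j = lam' j"
    proof (cases "j < n")
      case True
      then show ?thesis using eq[OF True] by (simp add: mu_def)
    next
      case False
      then show ?thesis using assms(1,2) by (auto simp: bounded_partitions_def)
    qed
  qed
qed

lemma sorted_gap:
  assumes "sorted_wrt (<) (L :: nat list)" "a \<le> b" "b < length L"
  shows "L ! a + (b - a) \<le> L ! b"
  using assms(2,3)
proof (induction b)
  case 0 then show ?case by simp
next
  case (Suc b)
  show ?case
  proof (cases "a = Suc b")
    case True then show ?thesis by simp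
  next
    case False
    then have "a \<le> b" using Suc by simp
    then have "L ! a + (b - a) \<le> L ! b" using Suc by simp
    moreover have "L ! b < L ! Suc b" using sorted_wrt_nth_less[OF assms(1)] Suc by simp
    ultimately show ?thesis using \<open>a \<le> b\<close> by linarith
  qed
qed

definition Phi :: "nat \<Rightarrow> (nat \<Rightarrow> nat) \<times> (nat \<Rightarrow> nat) \<Rightarrow> nat \<Rightarrow> nat" where
  "Phi n = (\<lambda>(lam, t). restrict (mu n lam \<circ> t) {..<n})"

lemma Phi_bij:
  "bij_betw (Phi n) (bounded_partitions n N \<times> {p. p permutes {..<n}})
     {f \<in> PiE {..<n} (\<lambda>_. {..<n+N}). inj_on f {..<n}}"
proof (rule bij_betw_imageI)
  show "inj_on (Phi n) (bounded_partitions n N \<times> {p. p permutes {..<n}})"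
  proof (rule inj_onI, clarify)
    fix lam t lam' t'
    assume l: "lam \<in> bounded_partitions n N" and t: "t permutes {..<n}"
       and l': "lam' \<in> bounded_partitions n N" and t': "t' permutes {..<n}"
       and e: "Phi n (lam, t) = Phi n (lam', t')"
    have e2: "mu n lam (t j) = mu n lam' (t' j)" if "j < n" for j
      using fun_cong[OF e, of j] that by (simp add: Phi_def)
    have "mu n lam ` {..<n} = mu n lam ` (t ` {..<n})" using permutes_image[OF t] by simp
    also have "\<dots> = mu n lam' ` (t' ` {..<n})" using e2 by (auto simp: image_iff)
    also have "\<dots> = mu n lam' ` {..<n}" using permutes_image[OF t'] by simp
    finally have ll: "lam = lam'" using mu_unique[OF l l'] by simp
    show "lam = lam' \<and> t = t'"
    proof
      show "t = t'"
      proof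
        fix j show "t j = t' j"
        proof (cases "j < n")
          case True
          then have "t j < n" "t' j < n" using permutes_in_image[OF t] permutes_in_image[OF t'] by auto
          then show ?thesis using e2[OF True] ll mu_inj[OF l] True by (auto dest: inj_onD)
        next
          case False
          then show ?thesis using permutes_not_in[OF t] permutes_not_in[OF t'] by auto
        qed
      qed
    qed (rule ll)
  qed
next
  show "Phi n ` (bounded_partitions n N \<times> {p. p permutes {..<n}}) =
     {f \<in> PiE {..<n} (\<lambda>_. {..<n+N}). inj_on f {..<n}}"
  proof (rule set_eqI, rule iffI)
    fix f assume "f \<in> Phi n ` (bounded_partitions n N \<times> {p. p permutes {..<n}})"
    then obtain lam t where l: "lam \<in> bounded_partitions n N" and t: "t permutes {..<n}"
      and f: "f = Phi n (lam, t)" by auto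
    have "inj_on (mu n lam \<circ> t) {..<n}"
      using comp_inj_on[OF permutes_inj_on[OF t], of "mu n lam"] mu_inj[OF l] permutes_image[OF t]
      by simp
    then have "inj_on f {..<n}" unfolding f Phi_def by (simp add: inj_on_def)
    moreover have "f \<in> PiE {..<n} (\<lambda>_. {..<n+N})"
      unfolding f Phi_def using mu_bound[OF l] permutes_in_image[OF t] by auto
    ultimately show "f \<in> {f \<in> PiE {..<n} (\<lambda>_. {..<n+N}). inj_on f {..<n}}" by simp
  next
    fix f assume "f \<in> {f \<in> PiE {..<n} (\<lambda>_. {..<n+N}). inj_on f {..<n}}"
    then have fP: "f \<in> PiE {..<n} (\<lambda>_. {..<n+N})" and fi: "inj_on f {..<n}" by auto
    define S where "S = f ` {..<n}"
    define L where "L = sorted_list_of_set S"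
    have finS: "finite S" by (simp add: S_def)
    have cS: "card S = n" using fi by (simp add: S_def card_image)
    have sL: "sorted_wrt (<) L" by (simp add: L_def)
    have setL: "set L = S" using finS by (simp add: L_def)
    have lenL: "length L = n" using cS by (simp add: L_def)
    have Sb: "\<And>s. s \<in> S \<Longrightarrow> s < n + N" using fP by (auto simp: S_def)
    have ge: "a \<le> L ! a" if "a < n" for a
      using sorted_gap[OF sL, of 0 a] that lenL by simp
    have top: "L ! a + (n - 1 - a) < n + N" if "a < n" for a
    proof -
      have "L ! a + (n - 1 - a) \<le> L ! (n - 1)" using sorted_gap[OF sL, of a "n-1"] that lenL by simp
      moreover have "n - 1 < length L" using lenL that by simp
      then have "L ! (n - 1) \<in> set L" by (rule nth_mem)
      then have "L ! (n - 1) \<in> S" using setL by simp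
      ultimately show ?thesis using Sb by fastforce
    qed
    define lam where "lam j = (if j < n then L ! (n - 1 - j) - (n - 1 - j) else 0)" for j
    define index :: "nat list \<Rightarrow> nat \<Rightarrow> nat" where "index = (\<lambda>L y. SOME i. i < length L \<and> L ! i = y)"
    define t where "t j = (if j < n then n - 1 - index L (f j) else j)" for j
    have lamB: "lam \<in> bounded_partitions n N"
      unfolding bounded_partitions_def
    proof (intro CollectI conjI allI impI)
      fix i j assume ij: "i \<le> j" "j < n"
      have "L ! (n - 1 - j) + ((n - 1 - i) - (n - 1 - j)) \<le> L ! (n - 1 - i)"
        using sorted_gap[OF sL, of "n-1-j" "n-1-i"] ij lenL by simp
      moreover have "n - 1 - j \<le> L ! (n - 1 - j)" using ge[of "n-1-j"] ij by simp
      ultimately show "lam j \<le> lam i" using ij by (simp add: lam_def)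
    next
      fix i assume "i < n"
      then show "lam i \<le> N" using top[of "n-1-i"] by (simp add: lam_def)
    qed (simp add: lam_def)
    have mul: "mu n lam j = L ! (n - 1 - j)" if "j < n" for j
      using ge[of "n-1-j"] that by (simp add: mu_def lam_def)
    have idx: "index L (f j) < n" "L ! index L (f j) = f j" if "j < n" for j
    proof -
      have "f j \<in> set L" using setL that by (simp add: S_def)
      then obtain i where "i < length L \<and> L ! i = f j" by (auto simp: in_set_conv_nth)
      then have "(\<lambda>i. i < length L \<and> L ! i = f j) (SOME i. i < length L \<and> L ! i = f j)"
        by (rule someI[of "\<lambda>i. i < length L \<and> L ! i = f j" i])
      then have "index L (f j) < length L \<and> L ! index L (f j) = f j"
        by (simp only: index_def)
      then show "index L (f j) < n" "L ! index L (f j) = f j" using lenL by auto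
    qed
    have tP: "t permutes {..<n}"
    proof (rule inj_imp_permutes)
      show "inj_on t {..<n}"
      proof (rule inj_onI)
        fix a b assume ab: "a \<in> {..<n}" "b \<in> {..<n}" "t a = t b"
        have an: "a < n" and bn: "b < n" using ab by auto
        have ia: "index L (f a) < n" by (rule idx(1)[OF an])
        have ib: "index L (f b) < n" by (rule idx(1)[OF bn])
        have "n - 1 - index L (f a) = n - 1 - index L (f b)" using ab(3) an bn unfolding t_def by simp
        then have "index L (f a) = index L (f b)" using ia ib by linarith
        then have "L ! index L (f a) = L ! index L (f b)" by simp
        then have "f a = f b" by (simp only: idx(2)[OF an] idx(2)[OF bn])
        then show "a = b" using fi ab by (auto dest: inj_onD)
      qed
    qed (auto simp: t_def)
    have "Phi n (lam, t) = f"
    proof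
      fix j show "Phi n (lam, t) j = f j"
      proof (cases "j < n")
        case True
        have "t j < n" using True by (simp add: t_def)
        then have "mu n lam (t j) = L ! (n - 1 - t j)" by (rule mul)
        also have "\<dots> = f j" using idx[OF True] True by (simp add: t_def)
        finally show ?thesis using True by (simp add: Phi_def)
      next
        case False
        have "f j = undefined" by (rule PiE_arb[OF fP]) (use False in simp)
        moreover have "Phi n (lam, t) j = undefined" using False by (simp add: Phi_def)
        ultimately show ?thesis by simp
      qed
    qed
    moreover have "(lam, t) \<in> bounded_partitions n N \<times> {p. p permutes {..<n}}"
      using lamB tP by simp
    ultimately show "f \<in> Phi n ` (bounded_partitions n N \<times> {p. p permutes {..<n}})"
      by (metis image_eqI)
  qed
qed


lemma comb_sum:
  fixes g :: "(nat \<Rightarrow> nat) \<Rightarrow> 'a::comm_ring_1"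
  assumes zero: "\<And>f. f \<in> PiE {..<n} (\<lambda>_. {..<n+N}) \<Longrightarrow> \<not> inj_on f {..<n} \<Longrightarrow> g f = 0"
    and cong: "\<And>f f'. (\<And>j. j < n \<Longrightarrow> f j = f' j) \<Longrightarrow> g f = g f'"
    and perm: "\<And>f t. t permutes {..<n} \<Longrightarrow> g (f \<circ> t) = g f"
  shows "(\<Sum>f\<in>PiE {..<n} (\<lambda>_. {..<n+N}). g f) = of_nat (fact n) * (\<Sum>lam\<in>bounded_partitions n N. g (mu n lam))"
proof -
  let ?F = "PiE {..<n} (\<lambda>_. {..<n+N})"
  let ?Fi = "{f \<in> ?F. inj_on f {..<n}}"
  let ?P = "{p. p permutes {..<n}}"
  have "(\<Sum>f\<in>?F. g f) = (\<Sum>f\<in>?Fi. g f)"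
    by (rule sum.mono_neutral_right) (auto simp: finite_PiE zero)
  also have "\<dots> = (\<Sum>z\<in>bounded_partitions n N \<times> ?P. g (Phi n z))"
    by (rule sum.reindex_bij_betw[OF Phi_bij, symmetric])
  also have "\<dots> = (\<Sum>z\<in>bounded_partitions n N \<times> ?P. g (mu n (fst z)))"
  proof (rule sum.cong[OF refl])
    fix z assume "z \<in> bounded_partitions n N \<times> ?P"
    then obtain lam t where z: "z = (lam, t)" and t: "t permutes {..<n}" by auto
    have "g (Phi n z) = g (mu n lam \<circ> t)" unfolding z Phi_def
      by (rule cong) simp
    also have "\<dots> = g (mu n lam)" by (rule perm[OF t])
    finally show "g (Phi n z) = g (mu n (fst z))" by (simp add: z)
  qed
  also have "\<dots> = (\<Sum>lam\<in>bounded_partitions n N. \<Sum>t\<in>?P. g (mu n lam))"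
    by (subst sum.cartesian_product) (simp add: split_def)
  also have "\<dots> = (\<Sum>lam\<in>bounded_partitions n N. of_nat (fact n) * g (mu n lam))"
    using card_permutations[of "{..<n}" n] by simp
  also have "\<dots> = of_nat (fact n) * (\<Sum>lam\<in>bounded_partitions n N. g (mu n lam))"
    by (simp add: sum_distrib_left)
  finally show ?thesis .
qed

theorem theorem3p1:
  fixes m n N :: nat and x :: "nat \<Rightarrow> nat \<Rightarrow> 'a::field_char_0"
  assumes "m > 0" and "n > 0" and "N > 0"
    and "\<forall>i<2*m. vandermonde n (x i) \<noteq> 0"
  shows "(\<Sum>lam\<in>bounded_partitions n N. \<Prod>i<2*m. schur n lam (x i))
       = (\<Prod>i<2*m. 1 / vandermonde n (x i)) *
         hyperdet (2*m) n (\<lambda>t. \<Sum>r<n+N. (\<Prod>k<2*m. x k (t k)) ^ r)"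
proof -
  let ?g = "\<lambda>f. \<Prod>l<2*m. E n (x l) f"
  have sch: "schur n lam (x i) = E n (x i) (mu n lam) / vandermonde n (x i)" for lam i
    by (simp add: schur_def E_def mu_def)
  have "(\<Sum>f\<in>PiE {..<n} (\<lambda>_. {..<n+N}). ?g f) = of_nat (fact n) * (\<Sum>lam\<in>bounded_partitions n N. ?g (mu n lam))"
  proof (rule comb_sum)
    fix f :: "nat \<Rightarrow> nat" assume "f \<in> PiE {..<n} (\<lambda>_. {..<n+N})" "\<not> inj_on f {..<n}"
    then obtain a b where "a < n" "b < n" "a \<noteq> b" "f a = f b" by (auto simp: inj_on_def)
    then have "E n (x 0) f = 0" by (rule E_zero)
    moreover have "0 \<in> {..<2*m}" using assms(1) by simp
    ultimately have "\<exists>l\<in>{..<2*m}. E n (x l) f = 0" by blast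
    then show "?g f = 0" by (intro prod_zero) auto
  next
    fix f f' :: "nat \<Rightarrow> nat" assume "\<And>j. j < n \<Longrightarrow> f j = f' j"
    then show "?g f = ?g f'" by (intro prod.cong refl E_cong) auto
  next
    fix f t :: "nat \<Rightarrow> nat" assume t: "t permutes {..<n}"
    have "?g (f \<circ> t) = (\<Prod>l<2*m. of_int (sign t) * E n (x l) f)"
      by (simp add: E_compose[OF t])
    also have "\<dots> = of_int (sign t) ^ (2*m) * ?g f"
      by (simp add: prod.distrib)
    also have "(of_int (sign t) :: 'a) ^ (2*m) = ((of_int (sign t) :: 'a) * of_int (sign t)) ^ m"
      by (simp add: power_mult power2_eq_square)
    also have "((of_int (sign t) :: 'a) * of_int (sign t)) = 1"
      by (metis of_int_1 of_int_mult sign_idempotent)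
    finally show "?g (f \<circ> t) = ?g f" by (simp only: power_one mult_1_left)
  qed
  then have key: "(\<Sum>lam\<in>bounded_partitions n N. ?g (mu n lam)) =
      1 / of_nat (fact n) * (\<Sum>f\<in>PiE {..<n} (\<lambda>_. {..<n+N}). ?g f)"
  proof -
    assume eq: "(\<Sum>f\<in>PiE {..<n} (\<lambda>_. {..<n+N}). ?g f) = of_nat (fact n) * (\<Sum>lam\<in>bounded_partitions n N. ?g (mu n lam))"
    have nz: "(of_nat (fact n) :: 'a) \<noteq> 0" by simp
    show ?thesis unfolding eq using nz by simp
  qed
  have "(\<Sum>lam\<in>bounded_partitions n N. \<Prod>i<2*m. schur n lam (x i))
      = (\<Sum>lam\<in>bounded_partitions n N. (\<Prod>i<2*m. 1 / vandermonde n (x i)) * ?g (mu n lam))"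
    by (intro sum.cong refl) (simp add: sch prod_dividef)
  also have "\<dots> = (\<Prod>i<2*m. 1 / vandermonde n (x i)) * (\<Sum>lam\<in>bounded_partitions n N. ?g (mu n lam))"
    by (simp add: sum_distrib_left)
  also have "\<dots> = (\<Prod>i<2*m. 1 / vandermonde n (x i)) *
         hyperdet (2*m) n (\<lambda>t. \<Sum>r<n+N. (\<Prod>k<2*m. x k (t k)) ^ r)"
    by (simp only: key hyper_expand)
  finally show ?thesis .
qed

end
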